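(* Let $X$ be a Banach space, $(M,\mathfrak{M},\mu)$ a measure space containing a measurable set $A$ with $0<\mu(A)<\infty$, $1<p<\infty$ and $n\ge2$. Then $\ell_\infty^n$ is representable in $X$ if and only if $\ell_\infty^n$ is representable in the Lebesgue–Bochner space $L_p(M,\mathfrak{M},\mu;X)$.
   Context: $\ell_\infty^n$ is $\mathbb{R}^n$ with the maximum norm. A Banach space $Y$ is representable in $X$ if for each $\lambda>1$ there is a bounded linear map $T:Y\to X$ with $\|y\|\le\|Ty\|\le\lambda\|y\|$ for all $y\in Y$. *)

theory Defs
  imports "HOL-Analysis.Analysis"
begin

definition linf_norm :: "real^('n::finite) \<Rightarrow> real" where
  "linf_norm y = Max (range (\<lambda>i. \<bar>y $ i\<bar>))"

definition strongly_measurable :: "'b measure \<Rightarrow> ('b \<Rightarrow> 'a::real_normed_vector) \<Rightarrow> bool" where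
  "strongly_measurable M f \<longleftrightarrow>
     (\<exists>s. (\<forall>k. simple_function M (s k)) \<and> (\<forall>x\<in>space M. (\<lambda>k. s k x) \<longlonglongrightarrow> f x))"

text \<open>Representatives of elements of the Lebesgue--Bochner space L_p(M;X) and their norm.\<close>
definition Lp_space :: "'b measure \<Rightarrow> real \<Rightarrow> ('b \<Rightarrow> 'a::real_normed_vector) set" where
  "Lp_space M p = {f. strongly_measurable M f \<and> (\<integral>\<^sup>+x. ennreal (norm (f x) powr p) \<partial>M) < \<infinity>}"

definition Lp_norm :: "'b measure \<Rightarrow> real \<Rightarrow> ('b \<Rightarrow> 'a::real_normed_vector) \<Rightarrow> real" where
  "Lp_norm M p f = (enn2real (\<integral>\<^sup>+x. ennreal (norm (f x) powr p) \<partial>M)) powr (1 / p)"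

definition linf_representable ::
  "('n::finite) itself \<Rightarrow> ('a::real_normed_vector) itself \<Rightarrow> bool" where
  "linf_representable _ _ \<longleftrightarrow>
     (\<forall>c>1. \<exists>T :: real^'n \<Rightarrow> 'a. linear T \<and>
        (\<forall>y. linf_norm y \<le> norm (T y) \<and> norm (T y) \<le> c * linf_norm y))"

text \<open>ell_infty^n is representable in L_p(M;X); a linear map into the quotient space
  is given by a (pointwise) linear choice of representatives.\<close>
definition linf_representable_Lp ::
  "('n::finite) itself \<Rightarrow> 'b measure \<Rightarrow> real \<Rightarrow> ('a::real_normed_vector) itself \<Rightarrow> bool" where
  "linf_representable_Lp _ M p _ \<longleftrightarrow>
     (\<forall>c>1. \<exists>T :: real^'n \<Rightarrow> 'b \<Rightarrow> 'a.
        (\<forall>x. linear (\<lambda>y. T y x)) \<and> (\<forall>y. T y \<in> Lp_space M p) \<and>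
        (\<forall>y. linf_norm y \<le> Lp_norm M p (T y) \<and> Lp_norm M p (T y) \<le> c * linf_norm y))"

end

theory Submission
  imports Defs
begin

lemma powr_mid_strict:
  fixes a b p :: real
  assumes p: "1 < p" and a: "0 \<le> a" and b: "0 \<le> b" and ab: "b < a"
  shows "((a+b)/2) powr p < (a powr p + b powr p)/2"
proof (cases "b = 0")
  case True
  have a0: "0 < a" using ab True by simp
  have "2 powr 1 < 2 powr p" using p by (intro powr_less_mono) auto
  then have "2 < 2 powr p" by simp
  have "(a/2) powr p = a powr p / 2 powr p" using a0 by (simp add: powr_divide)
  also have "\<dots> < a powr p / 2"
    using \<open>2 < 2 powr p\<close> a0 by (intro divide_strict_left_mono) auto
  finally show ?thesis using True p by simp
next
  case False
  then have b0: "0 < b" using b by simp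
  define u where "u = (a+b)/2"
  have bu: "b < u" and ua: "u < a" using ab by (auto simp: u_def)
  have D: "\<And>x. 0 < x \<Longrightarrow> ((\<lambda>z. z powr p) has_real_derivative p * x powr (p - 1)) (at x)"
    by (rule has_real_derivative_powr)
  obtain z1 where z1: "u < z1" "z1 < a" "a powr p - u powr p = (a - u) * (p * z1 powr (p-1))"
    using MVT2[OF ua, of "\<lambda>z. z powr p" "\<lambda>x. p * x powr (p - 1)"] D b0 bu by force
  obtain z2 where z2: "b < z2" "z2 < u" "u powr p - b powr p = (u - b) * (p * z2 powr (p-1))"
    using MVT2[OF bu, of "\<lambda>z. z powr p" "\<lambda>x. p * x powr (p - 1)"] D b0 by force
  have "z2 powr (p-1) < z1 powr (p-1)"
    using z1 z2 b0 p by (intro powr_less_mono2) auto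
  then have "p * z2 powr (p-1) < p * z1 powr (p-1)" using p by simp
  moreover have "a - u = u - b" "0 < u - b" using bu by (auto simp: u_def field_simps)
  ultimately have "u powr p - b powr p < a powr p - u powr p"
    using z1(3) z2(3) by (metis mult_strict_left_mono)
  then show ?thesis by (simp add: u_def)
qed

lemma powr_mid_le:
  fixes a b p :: real
  assumes p: "1 < p" and a: "0 \<le> a" and b: "0 \<le> b"
  shows "((a+b)/2) powr p \<le> (a powr p + b powr p)/2"
proof -
  consider "a = b" | "b < a" | "a < b" by linarith
  then show ?thesis
  proof cases
    case 2 then show ?thesis using powr_mid_strict[OF p a b] by simp
  next
    case 3 then show ?thesis using powr_mid_strict[OF p b a] by (simp add: add.commute)
  qed simp
qed


lemma kappa_exists:
  fixes p \<delta> :: real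
  assumes p: "1 < p" and d: "0 < \<delta>"
  shows "\<exists>\<kappa>>0. \<forall>a b h. 0 \<le> a \<and> a \<le> 1 \<and> 0 \<le> b \<and> b \<le> 1 \<and> 0 \<le> h \<and> h \<le> (a+b)/2 \<and>
      (a powr p + b powr p)/2 - h powr p < \<kappa> \<longrightarrow> \<bar>a - h\<bar> < \<delta>"
proof -
  define F where "F = (\<lambda>z::real\<times>real\<times>real. (fst z powr p + fst (snd z) powr p)/2 - snd (snd z) powr p)"
  define K where "K = ({0..1} \<times> {0..1} \<times> {0..1}) \<inter> {z::real\<times>real\<times>real. snd (snd z) \<le> (fst z + fst (snd z))/2}
     \<inter> {z. \<delta> \<le> \<bar>fst z - snd (snd z)\<bar>}"
  have "compact K" unfolding K_def
    by (intro compact_Int_closed compact_Times compact_Icc closed_Collect_le continuous_intros) auto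
  have Kpos: "0 < F z" if "z \<in> K" for z
  proof -
    obtain a b h where z: "z = (a,b,h)" by (cases z) auto
    have ab: "0 \<le> a" "a \<le> 1" "0 \<le> b" "b \<le> 1" "0 \<le> h" "h \<le> (a+b)/2" "\<delta> \<le> \<bar>a - h\<bar>"
      using that unfolding K_def z by auto
    have hu: "h powr p \<le> ((a+b)/2) powr p" using ab p by (intro powr_mono2) auto
    show ?thesis
    proof (cases "a = b")
      case True
      then have "h < a" using ab d by auto
      then have "h powr p < a powr p" using ab p by (intro powr_less_mono2) auto
      then show ?thesis using True by (simp add: F_def z)
    next
      case False
      then have "((a+b)/2) powr p < (a powr p + b powr p)/2"
        using powr_mid_strict[OF p ab(1) ab(3)] powr_mid_strict[OF p ab(3) ab(1)]
        by (cases "b < a") (auto simp: add.commute)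
      then show ?thesis using hu by (simp add: F_def z)
    qed
  qed
  show ?thesis
  proof (cases "K = {}")
    case True
    show ?thesis
    proof (rule exI[of _ 1], intro conjI allI impI)
      fix a b h assume H: "0 \<le> a \<and> a \<le> 1 \<and> 0 \<le> b \<and> b \<le> 1 \<and> 0 \<le> h \<and> h \<le> (a+b)/2 \<and>
      (a powr p + b powr p)/2 - h powr p < 1"
      show "\<bar>a - h\<bar> < \<delta>"
      proof (rule ccontr)
        assume "\<not> ?thesis"
        then have "(a,b,h) \<in> K" using H by (auto simp: K_def)
        then show False using True by simp
      qed
    qed simp
  next
    case False
    have "continuous_on K F" unfolding F_def
      by (intro continuous_intros continuous_on_powr') (use p in \<open>auto simp: K_def\<close>)
    then obtain z0 where z0: "z0 \<in> K" "\<And>y. y \<in> K \<Longrightarrow> F z0 \<le> F y"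
      using continuous_attains_inf[OF \<open>compact K\<close> False] by blast
    show ?thesis
    proof (rule exI[of _ "F z0"], intro conjI allI impI)
      show "0 < F z0" using Kpos z0 by blast
      fix a b h assume H: "0 \<le> a \<and> a \<le> 1 \<and> 0 \<le> b \<and> b \<le> 1 \<and> 0 \<le> h \<and> h \<le> (a+b)/2 \<and>
      (a powr p + b powr p)/2 - h powr p < F z0"
      show "\<bar>a - h\<bar> < \<delta>"
      proof (rule ccontr)
        assume "\<not> ?thesis"
        then have "(a,b,h) \<in> K" using H by (auto simp: K_def)
        then have "F z0 \<le> F (a,b,h)" by (rule z0)
        then show False using H by (simp add: F_def)
      qed
    qed
  qed
qed

lemma linf_ge: "\<bar>y $ i\<bar> \<le> linf_norm (y::real^'n::finite)"
  unfolding linf_norm_def by (rule Max_ge) auto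

lemma linf_attained: "\<exists>i. \<bar>y $ i\<bar> = linf_norm (y::real^'n::finite)"
proof -
  have "linf_norm y \<in> range (\<lambda>i. \<bar>y $ i\<bar>)" unfolding linf_norm_def by (rule Max_in) auto
  then show ?thesis by auto
qed

lemma linf_le_iff: "linf_norm (y::real^'n::finite) \<le> r \<longleftrightarrow> (\<forall>i. \<bar>y $ i\<bar> \<le> r)"
proof
  assume "linf_norm y \<le> r" then show "\<forall>i. \<bar>y $ i\<bar> \<le> r" using linf_ge[of y] order_trans by blast
next
  assume H: "\<forall>i. \<bar>y $ i\<bar> \<le> r"
  obtain i where "\<bar>y $ i\<bar> = linf_norm y" using linf_attained by blast
  then show "linf_norm y \<le> r" using H by metis
qed

lemma linf_nonneg: "0 \<le> linf_norm (y::real^'n::finite)"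
proof -
  have "\<bar>y $ i\<bar> \<le> linf_norm y" for i by (rule linf_ge)
  moreover have "0 \<le> \<bar>y $ i\<bar>" for i by simp
  ultimately show ?thesis by (meson order_trans)
qed

lemma linf_scale: "linf_norm (c *\<^sub>R (y::real^'n::finite)) = \<bar>c\<bar> * linf_norm y"
proof (rule antisym)
  show "linf_norm (c *\<^sub>R y) \<le> \<bar>c\<bar> * linf_norm y"
  proof -
    have "\<bar>(c *\<^sub>R y) $ i\<bar> \<le> \<bar>c\<bar> * linf_norm y" for i
      using mult_left_mono[OF linf_ge[of y i], of "\<bar>c\<bar>"] by (simp add: abs_mult)
    then show ?thesis by (simp add: linf_le_iff)
  qed
  obtain i where i: "\<bar>y $ i\<bar> = linf_norm y" using linf_attained by blast
  have "\<bar>c\<bar> * linf_norm y = \<bar>(c *\<^sub>R y) $ i\<bar>" using i by (simp add: abs_mult)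
  also have "\<dots> \<le> linf_norm (c *\<^sub>R y)" by (rule linf_ge)
  finally show "\<bar>c\<bar> * linf_norm y \<le> linf_norm (c *\<^sub>R y)" .
qed

lemma linf_zero_iff: "linf_norm (y::real^'n::finite) = 0 \<longleftrightarrow> y = 0"
proof
  assume "linf_norm y = 0"
  then have "\<forall>i. \<bar>y $ i\<bar> \<le> 0" using linf_le_iff[of y 0] by simp
  then show "y = 0" by (simp add: vec_eq_iff)
next
  assume "y = 0" then show "linf_norm y = 0" using linf_scale[of 0 y] by simp
qed

lemma linf_axis: "linf_norm (axis i (1::real) :: real^'n::finite) = 1"
proof (rule antisym)
  show "linf_norm (axis i (1::real) :: real^'n::finite) \<le> 1"
    unfolding linf_le_iff by (simp add: axis_def)
  show "1 \<le> linf_norm (axis i (1::real) :: real^'n::finite)"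
    using linf_ge[of "axis i (1::real) :: real^'n::finite" i] by simp
qed

definition verts :: "(real^'n::finite) set" where
  "verts = {e. \<forall>i. e $ i = 1 \<or> e $ i = -1}"

lemma linf_vert: "e \<in> verts \<Longrightarrow> linf_norm e = 1"
proof -
  assume e: "e \<in> verts"
  obtain i where i: "\<bar>e $ i\<bar> = linf_norm e" using linf_attained by blast
  from e have "e $ i = 1 \<or> e $ i = -1" unfolding verts_def by blast
  then have "\<bar>e $ i\<bar> = 1" by auto
  then show ?thesis using i by simp
qed

lemma vertex_bound_aux:
  fixes S :: "real^'n::finite \<Rightarrow> 'a::real_normed_vector"
  assumes S: "linear S" and V: "\<And>e. e \<in> verts \<Longrightarrow> norm (S e) \<le> m"
  shows "finite F \<Longrightarrow> \<forall>y. (\<forall>i. \<bar>y $ i\<bar> \<le> 1) \<and> (\<forall>i. i \<notin> F \<longrightarrow> \<bar>y $ i\<bar> = 1) \<longrightarrow> norm (S y) \<le> m"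
proof (induction F rule: finite_induct)
  case empty
  show ?case
  proof (intro allI impI)
    fix y :: "real^'n" assume "(\<forall>i. \<bar>y $ i\<bar> \<le> 1) \<and> (\<forall>i. i \<notin> {} \<longrightarrow> \<bar>y $ i\<bar> = 1)"
    then have "y \<in> verts" unfolding verts_def by (auto simp: abs_if split: if_splits)
    then show "norm (S y) \<le> m" by (rule V)
  qed
next
  case (insert i F)
  show ?case
  proof (intro allI impI)
    fix y :: "real^'n" assume y: "(\<forall>i. \<bar>y $ i\<bar> \<le> 1) \<and> (\<forall>j. j \<notin> insert i F \<longrightarrow> \<bar>y $ j\<bar> = 1)"
    define yp where "yp = (\<chi> j. if j = i then 1 else y $ j)"
    define ym where "ym = (\<chi> j. if j = i then -1 else y $ j)"
    define t where "t = y $ i"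
    have t: "\<bar>t\<bar> \<le> 1" using y by (simp add: t_def)
    have hp: "norm (S yp) \<le> m" using insert.IH y by (auto simp: yp_def)
    have hm: "norm (S ym) \<le> m" using insert.IH y by (auto simp: ym_def)
    have yeq: "y = ((1+t)/2) *\<^sub>R yp + ((1-t)/2) *\<^sub>R ym"
      by (auto simp: vec_eq_iff yp_def ym_def t_def field_simps)
    have "S y = ((1+t)/2) *\<^sub>R S yp + ((1-t)/2) *\<^sub>R S ym"
      by (subst yeq) (simp add: linear_add[OF S] linear_scale[OF S])
    then have "norm (S y) \<le> norm (((1+t)/2) *\<^sub>R S yp) + norm (((1-t)/2) *\<^sub>R S ym)"
      by (metis norm_triangle_ineq)
    also have "\<dots> = ((1+t)/2) * norm (S yp) + ((1-t)/2) * norm (S ym)"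
      using t by (simp add: abs_of_nonneg)
    also have "\<dots> \<le> ((1+t)/2) * m + ((1-t)/2) * m"
      using t hp hm by (intro add_mono mult_left_mono) auto
    also have "\<dots> = m" by (simp add: field_simps)
    finally show "norm (S y) \<le> m" .
  qed
qed

lemma vertex_bound:
  fixes S :: "real^'n::finite \<Rightarrow> 'a::real_normed_vector"
  assumes S: "linear S" and V: "\<And>e. e \<in> verts \<Longrightarrow> norm (S e) \<le> m"
  shows "norm (S y) \<le> m * linf_norm y"
proof (cases "y = 0")
  case True
  have "linf_norm (0::real^'n) = 0" by (simp add: linf_zero_iff)
  then show ?thesis using linear_0[OF S] True by simp
next
  case False
  define r where "r = linf_norm y"
  have r: "0 < r" using False linf_nonneg[of y] linf_zero_iff[of y] by (auto simp: r_def)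
  define y' where "y' = (1/r) *\<^sub>R y"
  have "linf_norm y' = 1" using r by (simp add: y'_def linf_scale r_def)
  then have "norm (S y') \<le> m"
    using vertex_bound_aux[OF S V, of UNIV] linf_le_iff[of y' 1] by simp
  moreover have "S y = r *\<^sub>R S y'" using r by (simp add: y'_def linear_scale[OF S])
  ultimately show ?thesis using r by (simp add: r_def mult.commute)
qed

lemma geo:
  fixes S :: "real^'n::finite \<Rightarrow> 'a::real_normed_vector"
  assumes S: "linear S" and V: "\<And>e. e \<in> verts \<Longrightarrow> norm (S e) \<le> m"
    and H: "\<And>i. (1 - \<eta>) * m \<le> norm (S (axis i 1))"
  shows "norm (S y) \<le> m * linf_norm y" "(1 - 2*\<eta>) * m * linf_norm y \<le> norm (S y)"
proof -
  show "norm (S y) \<le> m * linf_norm y" by (rule vertex_bound[OF S V])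
  define r where "r = linf_norm y"
  obtain i where i: "\<bar>y $ i\<bar> = r" using linf_attained unfolding r_def by blast
  define z where "z = y - (2 * y $ i) *\<^sub>R axis i 1"
  have "\<bar>z $ j\<bar> \<le> r" for j
  proof (cases "j = i")
    case True then show ?thesis using i by (simp add: z_def axis_def)
  next
    case False then show ?thesis using linf_ge[of y j] by (simp add: z_def axis_def r_def)
  qed
  then have "linf_norm z \<le> r" by (simp add: linf_le_iff)
  have v1: "((\<chi> j. 1) :: real^'n) \<in> verts" by (simp add: verts_def)
  have m0: "0 \<le> m" using V[OF v1] norm_ge_zero[of "S ((\<chi> j. 1) :: real^'n)"] by linarith
  have nz: "norm (S z) \<le> m * r"
    using vertex_bound[OF S V, of z] \<open>linf_norm z \<le> r\<close> m0 mult_left_mono[of "linf_norm z" r m] by linarith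
  have Sy: "S y = S z + (2 * y $ i) *\<^sub>R S (axis i 1)"
    by (simp add: z_def linear_diff[OF S] linear_scale[OF S])
  have "norm ((2 * y $ i) *\<^sub>R S (axis i 1)) = 2 * r * norm (S (axis i 1))"
    using i by (simp add: abs_mult)
  also have "\<dots> \<ge> 2 * r * ((1 - \<eta>) * m)"
    using H[of i] i by (intro mult_left_mono) auto
  finally have "2 * r * ((1 - \<eta>) * m) \<le> norm ((2 * y $ i) *\<^sub>R S (axis i 1))" .
  moreover have "(2 * y $ i) *\<^sub>R S (axis i 1) = S y - S z" using Sy by simp
  then have "norm ((2 * y $ i) *\<^sub>R S (axis i 1)) \<le> norm (S y) + norm (S z)"
    using norm_triangle_ineq4[of "S y" "S z"] by simp
  ultimately have "2 * r * ((1 - \<eta>) * m) - m * r \<le> norm (S y)" using nz by linarith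
  moreover have "2 * r * ((1 - \<eta>) * m) - m * r = (1 - 2*\<eta>) * m * r" by (simp add: algebra_simps)
  ultimately show "(1 - 2*\<eta>) * m * linf_norm y \<le> norm (S y)" by (simp add: r_def)
qed

lemma Lp_meas:
  assumes "f \<in> Lp_space M p"
  shows "f \<in> borel_measurable M"
proof -
  from assms obtain s where s: "\<And>k. simple_function M (s k)" "\<And>x. x \<in> space M \<Longrightarrow> (\<lambda>k. s k x) \<longlonglongrightarrow> f x"
    unfolding Lp_space_def strongly_measurable_def by blast
  show ?thesis
    by (rule borel_measurable_LIMSEQ_metric[of s]) (auto intro: borel_measurable_simple_function s)
qed

lemma Lp_int:
  fixes f :: "'b \<Rightarrow> 'a::real_normed_vector"
  assumes f: "f \<in> Lp_space M p" and p: "0 < p"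
  shows "integrable M (\<lambda>x. norm (f x) powr p)"
    "integral\<^sup>L M (\<lambda>x. norm (f x) powr p) = Lp_norm M p f powr p"
proof -
  have [measurable]: "f \<in> borel_measurable M" using Lp_meas[OF f] .
  define I where "I = (\<integral>\<^sup>+x. ennreal (norm (f x) powr p) \<partial>M)"
  have "I < \<infinity>" using f by (simp add: Lp_space_def I_def)
  then have I: "I = ennreal (enn2real I)" by simp
  show "integrable M (\<lambda>x. norm (f x) powr p)"
    by (rule integrableI_nn_integral_finite[of _ _ "enn2real I"]) (use I in \<open>auto simp: I_def\<close>)
  have "integral\<^sup>L M (\<lambda>x. norm (f x) powr p) = enn2real I"
    unfolding I_def by (rule integral_eq_nn_integral) auto
  also have "\<dots> = Lp_norm M p f powr p"
    unfolding Lp_norm_def I_def[symmetric] using p by (simp add: powr_powr)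
  finally show "integral\<^sup>L M (\<lambda>x. norm (f x) powr p) = Lp_norm M p f powr p" .
qed

lemma easy_dir:
  fixes M :: "'b measure" and A :: "'b set" and p :: real
  assumes A: "A \<in> sets M" and A0: "0 < emeasure M A" and A1: "emeasure M A < \<infinity>" and p: "1 < p"
  shows "linf_representable TYPE('n::finite) TYPE('a::banach) \<Longrightarrow> linf_representable_Lp TYPE('n) M p TYPE('a)"
  unfolding linf_representable_def linf_representable_Lp_def
proof (intro allI impI)
  fix c :: real assume c: "1 < c"
  assume "\<forall>c>1. \<exists>T :: real^'n \<Rightarrow> 'a. linear T \<and>
        (\<forall>y. linf_norm y \<le> norm (T y) \<and> norm (T y) \<le> c * linf_norm y)"
  then obtain T :: "real^'n \<Rightarrow> 'a" where T: "linear T" "\<And>y. linf_norm y \<le> norm (T y) \<and> norm (T y) \<le> c * linf_norm y"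
    using c by blast
  define mu where "mu = enn2real (emeasure M A)"
  have muA: "emeasure M A = ennreal mu" using A1 by (simp add: mu_def)
  have mu0: "0 < mu" using A0 A1 by (simp add: mu_def enn2real_positive_iff)
  define K where "K = mu powr (-1/p)"
  have K0: "0 < K" using mu0 by (simp add: K_def)
  define T' where "T' = (\<lambda>y x. (indicator A x * K) *\<^sub>R T y)"
  have lin: "linear (\<lambda>y. T' y x)" for x
    unfolding T'_def by (intro linearI) (simp_all add: linear_add[OF T(1)] linear_scale[OF T(1)] scaleR_add_right)
  have nrm: "norm (T' y x) powr p = indicator A x * (K powr p * norm (T y) powr p)" for y x
    using p K0 by (auto simp: T'_def indicator_def powr_mult)
  have Kp: "K powr p = 1 / mu"
  proof -
    have "K powr p = mu powr (-1/p * p)" by (simp add: K_def powr_powr)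
    also have "-1/p * p = -1" using p by simp
    also have "mu powr (-1) = 1 / mu" using mu0 by (simp add: powr_minus divide_inverse)
    finally show ?thesis .
  qed
  have nn: "(\<integral>\<^sup>+x. ennreal (norm (T' y x) powr p) \<partial>M) = ennreal (norm (T y) powr p)" for y
  proof -
    have "(\<integral>\<^sup>+x. ennreal (norm (T' y x) powr p) \<partial>M) = (\<integral>\<^sup>+x. ennreal (K powr p * norm (T y) powr p) * indicator A x \<partial>M)"
      by (intro nn_integral_cong) (simp add: nrm indicator_def)
    also have "\<dots> = ennreal (K powr p * norm (T y) powr p) * emeasure M A"
      by (rule nn_integral_cmult_indicator[OF A])
    also have "\<dots> = ennreal (K powr p * norm (T y) powr p * mu)"
      using mu0 K0 by (simp add: muA ennreal_mult)
    also have "K powr p * norm (T y) powr p * mu = norm (T y) powr p" using mu0 by (simp add: Kp)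
    finally show ?thesis .
  qed
  have Lpn: "Lp_norm M p (T' y) = norm (T y)" for y
    unfolding Lp_norm_def nn using p by (simp add: powr_powr)
  have sf: "simple_function M (T' y)" for y
    unfolding T'_def by (rule simple_function_compose1[where g="\<lambda>t. (t * K) *\<^sub>R T y"]) (simp add: A)
  have inLp: "T' y \<in> Lp_space M p" for y
    unfolding Lp_space_def strongly_measurable_def
    using sf[of y] by (auto simp: nn intro!: exI[of _ "\<lambda>k. T' y"])
  show "\<exists>T :: real^'n \<Rightarrow> 'b \<Rightarrow> 'a. (\<forall>x. linear (\<lambda>y. T y x)) \<and> (\<forall>y. T y \<in> Lp_space M p) \<and>
        (\<forall>y. linf_norm y \<le> Lp_norm M p (T y) \<and> Lp_norm M p (T y) \<le> c * linf_norm y)"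
    by (rule exI[of _ T']) (use lin inLp T(2) in \<open>simp add: Lpn\<close>)
qed

lemma finite_verts: "finite (verts :: (real^'n::finite) set)"
proof -
  have "verts \<subseteq> (\<lambda>f. \<chi> i. f i) ` (PiE (UNIV::'n set) (\<lambda>_. {-1, 1::real}))"
  proof
    fix e :: "real^'n" assume "e \<in> verts"
    then have "(\<lambda>i. e $ i) \<in> PiE UNIV (\<lambda>_. {-1, 1})" by (auto simp: verts_def PiE_iff)
    moreover have "e = (\<chi> i. (\<lambda>i. e $ i) i)" by simp
    ultimately show "e \<in> (\<lambda>f. \<chi> i. f i) ` (PiE (UNIV::'n set) (\<lambda>_. {-1, 1::real}))" by blast
  qed
  moreover have "finite (PiE (UNIV::'n set) (\<lambda>_. {-1, 1::real}))" by (intro finite_PiE) auto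
  ultimately show ?thesis using finite_subset by blast
qed

lemma one_vert: "((\<chi> j. 1) :: real^'n::finite) \<in> verts"
  by (simp add: verts_def)

lemma verts_ne: "(verts :: (real^'n::finite) set) \<noteq> {}"
  using one_vert by blast

definition pr :: "real^'n::finite \<Rightarrow> 'n \<Rightarrow> real^'n" where
  "pr e i = (\<chi> j. if j = i then e $ i else - (e $ j))"

lemma pr_vert: "e \<in> verts \<Longrightarrow> pr e i \<in> verts"
  by (auto simp: verts_def pr_def)

lemma pr_sum: "e + pr e i = (2 * e $ i) *\<^sub>R axis i 1"
  by (auto simp: vec_eq_iff pr_def axis_def)

lemma pr_norm:
  fixes S :: "real^'n::finite \<Rightarrow> 'a::real_normed_vector"
  assumes S: "linear S" and e: "e \<in> verts"
  shows "2 * norm (S (axis i 1)) \<le> norm (S e) + norm (S (pr e i))"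
proof -
  have "S e + S (pr e i) = (2 * e $ i) *\<^sub>R S (axis i 1)"
    using pr_sum[of e i] by (metis linear_add[OF S] linear_scale[OF S])
  moreover have "e $ i = 1 \<or> e $ i = -1" using e by (simp add: verts_def)
  then have "\<bar>e $ i\<bar> = 1" by auto
  ultimately have "norm (S e + S (pr e i)) = 2 * norm (S (axis i 1))" by (simp add: abs_mult)
  then show ?thesis using norm_triangle_ineq[of "S e" "S (pr e i)"] by simp
qed

lemma pointwise:
  fixes S :: "real^'n::finite \<Rightarrow> 'a::real_normed_vector"
  assumes S: "linear S" and p: "1 < p" and kap: "0 < \<kappa>"
    and Kp: "\<forall>a b h. 0 \<le> a \<and> a \<le> 1 \<and> 0 \<le> b \<and> b \<le> 1 \<and> 0 \<le> h \<and> h \<le> (a+b)/2 \<and>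
      (a powr p + b powr p)/2 - h powr p < \<kappa> \<longrightarrow> \<bar>a - h\<bar> < \<delta>"
    and Phi: "(\<Sum>e\<in>verts. \<Sum>i\<in>UNIV. ((norm (S e) powr p + norm (S (pr e i)) powr p)/2 - norm (S (axis i 1)) powr p))
       < (\<kappa> / card (verts :: (real^'n) set)) * (\<Sum>e\<in>verts. norm (S e) powr p)"
  shows "\<exists>m>0. (\<forall>e\<in>verts. norm (S e) \<le> m) \<and> (\<forall>i. (1 - \<delta>) * m \<le> norm (S (axis i 1)))"
proof -
  define V where "V = (verts :: (real^'n) set)"
  have fV: "finite V" and neV: "V \<noteq> {}" using finite_verts verts_ne by (auto simp: V_def)
  define N where "N = card V"
  have N0: "0 < N" using fV neV by (simp add: N_def card_gt_0_iff)
  define g where "g e = norm (S e)" for e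
  define h where "h i = norm (S (axis i 1))" for i
  define st where "st e i = (g e powr p + g (pr e i) powr p)/2 - h i powr p" for e i
  define m where "m = Max (g ` V)"
  have gm: "g e \<le> m" if "e \<in> V" for e using fV that by (auto simp: m_def)
  have "m \<in> g ` V" unfolding m_def by (rule Max_in) (use fV neV in auto)
  then obtain es where es: "es \<in> V" "g es = m" by auto
  have g0: "0 \<le> g e" for e by (simp add: g_def)
  have h0: "0 \<le> h i" for i by (simp add: h_def)
  have prn: "2 * h i \<le> g e + g (pr e i)" if "e \<in> V" for e i
    using pr_norm[OF S, of e i] that by (simp add: g_def h_def V_def)
  have st0: "0 \<le> st e i" if "e \<in> V" for e i
  proof -
    have "h i powr p \<le> ((g e + g (pr e i))/2) powr p"
      using prn[OF that, of i] h0[of i] p by (intro powr_mono2) auto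
    also have "\<dots> \<le> (g e powr p + g (pr e i) powr p)/2"
      by (rule powr_mid_le[OF p g0 g0])
    finally show ?thesis by (simp add: st_def)
  qed
  have Phi': "(\<Sum>e\<in>V. \<Sum>i\<in>UNIV. st e i) < (\<kappa> / N) * (\<Sum>e\<in>V. g e powr p)"
    using Phi by (simp add: st_def g_def h_def V_def N_def)
  have W: "(\<Sum>e\<in>V. g e powr p) \<le> N * m powr p"
  proof -
    have "(\<Sum>e\<in>V. g e powr p) \<le> of_nat (card V) * m powr p"
      by (rule sum_bounded_above) (use gm g0 p in \<open>auto intro: powr_mono2\<close>)
    then show ?thesis by (simp add: N_def)
  qed
  have Phi0: "0 \<le> (\<Sum>e\<in>V. \<Sum>i\<in>UNIV. st e i)"
    by (intro sum_nonneg) (use st0 in auto)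
  have m0: "0 < m"
  proof (rule ccontr)
    assume "\<not> 0 < m"
    then have "m = 0" using g0[of es] es by simp
    then have "m powr p = 0" by simp
    then have "(\<Sum>e\<in>V. g e powr p) \<le> 0" using W by simp
    then show False using Phi' Phi0 kap N0
      by (smt (verit) divide_pos_pos mult_nonneg_nonpos of_nat_0_less_iff)
  qed
  have sti: "st es i < \<kappa> * m powr p" for i
  proof -
    have "st es i \<le> (\<Sum>i\<in>UNIV. st es i)"
      by (rule member_le_sum) (use st0 es in auto)
    also have "\<dots> \<le> (\<Sum>e\<in>V. \<Sum>i\<in>UNIV. st e i)"
      by (rule member_le_sum[where f="\<lambda>e. \<Sum>i\<in>UNIV. st e i"]) (use st0 es fV in \<open>auto intro: sum_nonneg\<close>)
    also have "\<dots> < (\<kappa> / N) * (\<Sum>e\<in>V. g e powr p)" by (rule Phi')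
    also have "\<dots> \<le> (\<kappa> / N) * (N * m powr p)"
      using W kap N0 by (intro mult_left_mono) auto
    also have "\<dots> = \<kappa> * m powr p" using N0 by simp
    finally show ?thesis .
  qed
  have hi: "(1 - \<delta>) * m \<le> h i" for i
  proof -
    define b where "b = g (pr es i) / m"
    define hh where "hh = h i / m"
    have "pr es i \<in> V" using pr_vert[of es i] es by (simp add: V_def)
    then have b01: "0 \<le> b" "b \<le> 1" using g0 gm[of "pr es i"] es m0
      by (auto simp: b_def V_def field_simps)
    have hh0: "0 \<le> hh" using h0 m0 by (simp add: hh_def)
    have hhb: "hh \<le> (1 + b)/2" using prn[OF es(1), of i] es m0
      by (simp add: hh_def b_def field_simps)
    have mp: "0 < m powr p" using m0 by simp
    have "(1 powr p + b powr p)/2 - hh powr p = st es i / m powr p"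
      using m0 es g0 h0 by (simp add: st_def b_def hh_def powr_divide field_simps)
    also have "\<dots> < \<kappa>" using sti[of i] mp by (simp add: divide_less_eq)
    finally have lt: "(1 powr p + b powr p)/2 - hh powr p < \<kappa>" .
    have "\<bar>1 - hh\<bar> < \<delta>" using Kp[rule_format, of 1 b hh] lt b01 hh0 hhb by simp
    then have "1 - \<delta> < hh" by linarith
    then show ?thesis using m0 by (simp add: hh_def field_simps)
  qed
  show ?thesis
    by (rule exI[of _ m]) (use m0 gm hi in \<open>auto simp: g_def h_def V_def\<close>)
qed

lemma arith_aux: "(a::real) \<le> C \<Longrightarrow> b \<le> C \<Longrightarrow> 1 \<le> h \<Longrightarrow> X = (a+b)/2 - h \<Longrightarrow> X \<le> C - 1"
  by (simp add: field_simps)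

lemma hard_dir:
  fixes M :: "'b measure" and p :: real
  assumes p: "1 < p"
  shows "linf_representable_Lp TYPE('n::finite) M p TYPE('a::real_normed_vector) \<Longrightarrow> linf_representable TYPE('n) TYPE('a)"
  unfolding linf_representable_def linf_representable_Lp_def
proof (intro allI impI)
  fix lam :: real assume lam: "1 < lam"
  assume HT: "\<forall>c>1. \<exists>T :: real^'n \<Rightarrow> 'b \<Rightarrow> 'a.
        (\<forall>x. linear (\<lambda>y. T y x)) \<and> (\<forall>y. T y \<in> Lp_space M p) \<and>
        (\<forall>y. linf_norm y \<le> Lp_norm M p (T y) \<and> Lp_norm M p (T y) \<le> c * linf_norm y)"
  define \<delta> where "\<delta> = (1 - 1/lam)/4"
  have d0: "0 < \<delta>" using lam by (simp add: \<delta>_def)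
  have dlam: "1 \<le> lam * (1 - 2*\<delta>)" using lam by (simp add: \<delta>_def field_simps)
  have d2: "0 < 1 - 2*\<delta>" using lam by (simp add: \<delta>_def field_simps)
  obtain \<kappa> where kap: "0 < \<kappa>" and Kp: "\<forall>a b h. 0 \<le> a \<and> a \<le> 1 \<and> 0 \<le> b \<and> b \<le> 1 \<and> 0 \<le> h \<and> h \<le> (a+b)/2 \<and>
      (a powr p + b powr p)/2 - h powr p < \<kappa> \<longrightarrow> \<bar>a - h\<bar> < \<delta>"
    using kappa_exists[OF p d0] by blast
  define V where "V = (verts :: (real^'n) set)"
  have fV: "finite V" and neV: "V \<noteq> {}" using finite_verts verts_ne by (auto simp: V_def)
  define N where "N = real (card V)"
  have N0: "0 < N" using fV neV by (simp add: N_def card_gt_0_iff)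
  define nn where "nn = real CARD('n)"
  have nn0: "0 < nn" by (simp add: nn_def)
  define \<theta> where "\<theta> = \<kappa> / N"
  have th0: "0 < \<theta>" using kap N0 by (simp add: \<theta>_def)
  define c where "c = (1 + \<theta>/(2*nn)) powr (1/p)"
  have base: "1 < 1 + \<theta>/(2*nn)" using th0 nn0 by simp
  have c1: "1 < c"
  proof -
    have "1 powr (1/p) < (1 + \<theta>/(2*nn)) powr (1/p)" using base p by (intro powr_less_mono2) auto
    then show ?thesis by (simp add: c_def)
  qed
  have cp: "c powr p = 1 + \<theta>/(2*nn)" using p base by (simp add: c_def powr_powr)
  obtain T :: "real^'n \<Rightarrow> 'b \<Rightarrow> 'a" where Tlin: "\<And>x. linear (\<lambda>y. T y x)" and TL: "\<And>y. T y \<in> Lp_space M p"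
    and Tb: "\<And>y. linf_norm y \<le> Lp_norm M p (T y) \<and> Lp_norm M p (T y) \<le> c * linf_norm y"
    using HT c1 by blast
  have p0: "0 < p" using p by simp
  define G where "G e x = norm (T e x) powr p" for e x
  define H where "H i x = norm (T (axis i 1) x) powr p" for i x
  have intG: "integrable M (G e)" for e unfolding G_def by (rule Lp_int(1)[OF TL p0])
  have intH: "integrable M (H i)" for i unfolding H_def by (rule Lp_int(1)[OF TL p0])
  have IG: "1 \<le> integral\<^sup>L M (G e) \<and> integral\<^sup>L M (G e) \<le> c powr p" if "e \<in> V" for e
  proof -
    have l1: "linf_norm e = 1" using that linf_vert by (simp add: V_def)
    have a: "1 \<le> Lp_norm M p (T e)" "Lp_norm M p (T e) \<le> c" using Tb[of e] l1 by auto
    have "1 powr p \<le> Lp_norm M p (T e) powr p" using a p by (intro powr_mono2) auto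
    moreover have "Lp_norm M p (T e) powr p \<le> c powr p" using a p by (intro powr_mono2) auto
    ultimately show ?thesis unfolding G_def Lp_int(2)[OF TL p0] by simp
  qed
  have IH: "1 \<le> integral\<^sup>L M (H i)" for i
  proof -
    have a: "1 \<le> Lp_norm M p (T (axis i 1))" using Tb[of "axis i 1"] linf_axis[of i] by auto
    have "1 powr p \<le> Lp_norm M p (T (axis i 1)) powr p" using a p by (intro powr_mono2) auto
    then show ?thesis unfolding H_def Lp_int(2)[OF TL p0] by simp
  qed
  define F where "F e i x = (G e x + G (pr e i) x)/2 - H i x" for e i x
  define Phi where "Phi x = (\<Sum>e\<in>V. \<Sum>i\<in>UNIV. F e i x)" for x
  define W where "W x = (\<Sum>e\<in>V. G e x)" for x
  have intF: "integrable M (F e i)" for e i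
    unfolding F_def using intG intH by simp
  have intPhi: "integrable M Phi" unfolding Phi_def using intF by simp
  have intW: "integrable M W" unfolding W_def using intG by simp
  have IF: "integral\<^sup>L M (F e i) \<le> c powr p - 1" if "e \<in> V" for e i
  proof -
    have "integral\<^sup>L M (F e i) = (integral\<^sup>L M (G e) + integral\<^sup>L M (G (pr e i)))/2 - integral\<^sup>L M (H i)"
      unfolding F_def using intG intH by simp
    moreover have "pr e i \<in> V" using pr_vert that by (simp add: V_def)
    then have "integral\<^sup>L M (G (pr e i)) \<le> c powr p" using IG by blast
    ultimately show ?thesis
      using arith_aux[of "integral\<^sup>L M (G e)" "c powr p" "integral\<^sup>L M (G (pr e i))" "integral\<^sup>L M (H i)" "integral\<^sup>L M (F e i)"]
        IG[OF that] IH[of i] by blast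
  qed
  have IPhi: "integral\<^sup>L M Phi \<le> N * nn * (c powr p - 1)"
  proof -
    have "integral\<^sup>L M Phi = (\<Sum>e\<in>V. \<Sum>i\<in>UNIV. integral\<^sup>L M (F e i))"
      unfolding Phi_def using intF by (simp add: integral_sum)
    also have "\<dots> \<le> (\<Sum>e\<in>V. \<Sum>i\<in>(UNIV::'n set). c powr p - 1)"
      by (intro sum_mono) (use IF in auto)
    also have "\<dots> = N * nn * (c powr p - 1)" by (simp add: N_def nn_def)
    finally show ?thesis .
  qed
  have IW: "N \<le> integral\<^sup>L M W"
  proof -
    have "integral\<^sup>L M W = (\<Sum>e\<in>V. integral\<^sup>L M (G e))"
      unfolding W_def using intG by (simp add: integral_sum)
    also have "\<dots> \<ge> (\<Sum>e\<in>V. 1)" by (intro sum_mono) (use IG in auto)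
    finally show ?thesis by (simp add: N_def)
  qed
  have "\<exists>x. Phi x < \<theta> * W x"
  proof (rule ccontr)
    assume "\<not> ?thesis"
    then have le: "\<theta> * W x \<le> Phi x" for x by (simp add: not_less)
    have "integral\<^sup>L M (\<lambda>x. \<theta> * W x) \<le> integral\<^sup>L M Phi"
      by (rule integral_mono) (use intW intPhi le in auto)
    then have "\<theta> * integral\<^sup>L M W \<le> integral\<^sup>L M Phi" by simp
    moreover have "\<theta> * N \<le> \<theta> * integral\<^sup>L M W" using IW th0 by simp
    moreover have "N * nn * (c powr p - 1) = \<theta> * N / 2" using nn0 by (simp add: cp field_simps)
    moreover have "0 < \<theta> * N" using th0 N0 by simp
    ultimately show False using IPhi by linarith
  qed
  then obtain x where x: "Phi x < \<theta> * W x" by blast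
  define S where "S = (\<lambda>y. T y x)"
  have S: "linear S" using Tlin by (simp add: S_def)
  have "(\<Sum>e\<in>verts. \<Sum>i\<in>UNIV. ((norm (S e) powr p + norm (S (pr e i)) powr p)/2 - norm (S (axis i 1)) powr p))
       < (\<kappa> / card (verts :: (real^'n) set)) * (\<Sum>e\<in>verts. norm (S e) powr p)"
    using x by (simp add: Phi_def W_def F_def G_def H_def S_def V_def \<theta>_def N_def)
  from pointwise[OF S p kap Kp this] obtain m where m: "0 < m" "\<And>e. e \<in> verts \<Longrightarrow> norm (S e) \<le> m"
    "\<And>i. (1 - \<delta>) * m \<le> norm (S (axis i 1))" by blast
  define R where "R = (\<lambda>y. (1 / ((1 - 2*\<delta>) * m)) *\<^sub>R S y)"
  have Rlin: "linear R" unfolding R_def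
    by (intro linearI) (simp_all add: linear_add[OF S] linear_scale[OF S] scaleR_add_right)
  have bnd: "linf_norm y \<le> norm (R y) \<and> norm (R y) \<le> lam * linf_norm y" for y
  proof -
    have up: "norm (S y) \<le> m * linf_norm y" and lo: "(1 - 2*\<delta>) * m * linf_norm y \<le> norm (S y)"
      using geo[OF S m(2) m(3)] by auto
    have k0: "0 < (1 - 2*\<delta>) * m" using d2 m(1) by simp
    have nR: "norm (R y) = norm (S y) / ((1 - 2*\<delta>) * m)" using k0 by (simp add: R_def)
    have "linf_norm y \<le> norm (R y)" using lo k0 by (simp add: nR pos_le_divide_eq mult.commute)
    moreover have "norm (R y) \<le> lam * linf_norm y"
    proof -
      have "norm (R y) \<le> m * linf_norm y / ((1 - 2*\<delta>) * m)" unfolding nR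
        by (rule divide_right_mono[OF up]) (use k0 in linarith)
      also have "\<dots> = linf_norm y / (1 - 2*\<delta>)" using m(1) by simp
      also have "\<dots> \<le> lam * linf_norm y"
        using dlam d2 linf_nonneg[of y]
        by (simp add: pos_divide_le_eq) (metis mult.assoc mult.commute mult_left_mono mult_cancel_right1)
      finally show ?thesis .
    qed
    ultimately show ?thesis ..
  qed
  show "\<exists>T :: real^'n \<Rightarrow> 'a. linear T \<and> (\<forall>y. linf_norm y \<le> norm (T y) \<and> norm (T y) \<le> lam * linf_norm y)"
    using Rlin bnd by blast
qed

theorem theorem2p3:
  fixes M :: "'b measure" and A :: "'b set" and p :: real
  assumes "A \<in> sets M" and "0 < emeasure M A" and "emeasure M A < \<infinity>"
    and "1 < p"
    and "CARD('n::finite) \<ge> 2"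
  shows "linf_representable TYPE('n) TYPE('a::banach)
     \<longleftrightarrow> linf_representable_Lp TYPE('n) M p TYPE('a)"
proof
  assume "linf_representable TYPE('n) TYPE('a)"
  then show "linf_representable_Lp TYPE('n) M p TYPE('a)"
    by (rule easy_dir[OF assms(1-4)])
next
  assume "linf_representable_Lp TYPE('n) M p TYPE('a)"
  then show "linf_representable TYPE('n) TYPE('a)"
    by (rule hard_dir[OF assms(4)])
qed

end
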